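(* Let $a\in\mathbf{R}$, $0<\tau_0^*<\tau^*$, and let $p(z,\xi)=(\xi+ia)^2\int_{\tau_0^*}^{\tau^*}e^{-(\tau^*-s)(\xi+ia)^2}w(s,z)\,ds$. Then: (i) for every $b>0$ and all integers $\alpha,\beta\ge0$ there exists $C>0$ such that $|\partial_z^\alpha\partial_\xi^\beta p(z,\xi)|\le C\langle\xi\rangle^{-\beta}$ for all $z\in\mathbf{C}$ with $|\operatorname{Im}z|<b$ and all $\xi\in\mathbf{R}$; (ii) there exists $C>0$ such that $|p(x,\xi)-w(\tau^*,x)|\le C\langle\xi\rangle^{-2}$ for all $x,\xi\in\mathbf{R}$.
   Context: $\langle\xi\rangle=\sqrt{1+|\xi|^2}$. Fix $a\in\mathbf{R}$; $K_a(\tau,y)=\frac{1}{\sqrt{4\pi\tau}}\exp(-\frac{|y|^2}{4\tau}+ay)$, and $w(\tau,x)=\int_0^\infty K_a(\tau,x-y)\,dy=\pi^{-1/2}e^{\tau a^2}\int_{-\infty}^{(x-2\tau a)/\sqrt{4\tau}}e^{-\theta^2}d\theta$, extended holomorphically in $x\in\mathbf{C}$ by the latter formula. The function $p$ is the symbol (acting on the right variable) of the operator $f\mapsto H_a\int_{\tau_0^*}^{\tau^*}U_a(\tau^*-s)[w(s,\cdot)f]\,ds$, where $H_a=-(\frac{d}{dy}-a)^2$ and $(U_a(\tau)\varphi)(y)=\int K_a(\tau,y-x)\varphi(x)dx$. *)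

theory Defs
  imports "HOL-Analysis.Analysis"
begin

text \<open>Holomorphic extension of the integral of exp(-theta^2) from -infinity to u:
  sqrt pi / 2 + (contour integral of exp(-theta^2) along the segment [0,u]),
  the segment integral being written out as u * int_0^1 exp(-(t u)^2) dt.\<close>
definition gauss_cum :: "complex \<Rightarrow> complex" where
  "gauss_cum u = complex_of_real (sqrt pi / 2)
      + u * integral {0..1} (\<lambda>t::real. exp (- ((complex_of_real t * u)\<^sup>2)))"

definition w_fun :: "real \<Rightarrow> real \<Rightarrow> complex \<Rightarrow> complex" where
  "w_fun a \<tau> z = complex_of_real (exp (\<tau> * a\<^sup>2) / sqrt pi)
      * gauss_cum ((z - complex_of_real (2 * \<tau> * a)) / complex_of_real (sqrt (4 * \<tau>)))"

definition p_sym :: "real \<Rightarrow> real \<Rightarrow> real \<Rightarrow> complex \<Rightarrow> real \<Rightarrow> complex" where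
  "p_sym a \<tau>0 \<tau> z \<xi> = (complex_of_real \<xi> + \<i> * complex_of_real a)\<^sup>2
      * integral {\<tau>0..\<tau>} (\<lambda>s. exp (- complex_of_real (\<tau> - s)
            * (complex_of_real \<xi> + \<i> * complex_of_real a)\<^sup>2) * w_fun a s z)"

definition vderiv :: "(real \<Rightarrow> complex) \<Rightarrow> real \<Rightarrow> complex" where
  "vderiv f x = vector_derivative f (at x)"

definition jbr :: "real \<Rightarrow> real" where
  "jbr \<xi> = sqrt (1 + \<xi>\<^sup>2)"

end

theory Submission
  imports Defs "HOL-Complex_Analysis.Complex_Analysis"
begin


lemma int_hasderiv:
  fixes W :: "nat \<Rightarrow> complex \<Rightarrow> real \<Rightarrow> complex"
  assumes d: "\<And>n z s. s \<in> {c..d} \<Longrightarrow> ((\<lambda>z. W n z s) has_field_derivative W (Suc n) z s) (at z)"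
  and ct: "\<And>n. continuous_on (UNIV \<times> {c..d}) (\<lambda>(z,s). W n z s)"
  shows "((\<lambda>z. integral {c..d} (W n z)) has_field_derivative integral {c..d} (W (Suc n) z)) (at z)"
proof -
  have ci: "continuous_on {c..d} (W m z)" for m z
    by (rule continuous_on_compose2[OF ct[of m], where f="\<lambda>s. (z,s)", simplified]) (auto intro!: continuous_intros)
  have "((\<lambda>z. integral (cbox c d) (W n z)) has_field_derivative integral (cbox c d) (W (Suc n) z)) (at z within UNIV)"
    by (rule leibniz_rule_field_derivative[where fx="W (Suc n)"]) 
       (auto intro!: d integrable_continuous_interval ci ct)
  then show ?thesis by simp
qed

lemma int_deriv_iter:
  fixes W :: "nat \<Rightarrow> complex \<Rightarrow> real \<Rightarrow> complex"
  assumes d: "\<And>n z s. s \<in> {c..d} \<Longrightarrow> ((\<lambda>z. W n z s) has_field_derivative W (Suc n) z s) (at z)"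
  and ct: "\<And>n. continuous_on (UNIV \<times> {c..d}) (\<lambda>(z,s). W n z s)"
  shows "(deriv ^^ n) (\<lambda>z. integral {c..d} (W 0 z)) = (\<lambda>z. integral {c..d} (W n z))"
proof (induction n)
  case 0 then show ?case by simp
next
  case (Suc n)
  show ?case using int_hasderiv[of c d W, OF d ct, of n] Suc
    by (auto intro!: ext DERIV_imp_deriv)
qed



fun qv :: "(complex \<times> nat \<times> nat) list \<Rightarrow> complex \<Rightarrow> real \<Rightarrow> complex" where
  "qv [] \<eta> t = 0"
| "qv ((c,m,j)#L) \<eta> t = c * \<eta>^m * complex_of_real t ^ j + qv L \<eta> t"

fun qd :: "(complex \<times> nat \<times> nat) list \<Rightarrow> (complex \<times> nat \<times> nat) list" where
  "qd [] = []"
| "qd ((c,m,j)#L) = (c * of_nat m, m - 1, j) # (-2*c, Suc m, Suc j) # qd L"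

lemma qv_deriv:
  "((\<lambda>\<eta>. qv L \<eta> t) has_field_derivative (qv (qd L) \<eta> t + 2 * of_real t * \<eta> * qv L \<eta> t)) (at \<eta>)"
proof (induction L)
  case Nil then show ?case by simp
next
  case (Cons x L)
  obtain c m j where x: "x = (c,m,j)" by (metis prod_cases3)
  have h: "((\<lambda>\<eta>. c * \<eta>^m * complex_of_real t ^ j) has_field_derivative c * (of_nat m * \<eta>^(m-1)) * complex_of_real t ^ j) (at \<eta>)"
    by (auto intro!: derivative_eq_intros)
  have e: "c * (of_nat m * \<eta>^(m-1)) * complex_of_real t ^ j = c * of_nat m * \<eta>^(m-1) * complex_of_real t ^ j
      + (-2*c) * \<eta>^(Suc m) * complex_of_real t ^ (Suc j) + 2 * of_real t * \<eta> * (c * \<eta>^m * complex_of_real t ^ j)"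
    by (simp add: algebra_simps)
  show ?case using DERIV_add[OF h Cons.IH] unfolding x by (simp add: e algebra_simps)
qed

lemma qv_exp_deriv:
  "((\<lambda>\<eta>. qv L \<eta> t * exp (- complex_of_real t * \<eta>\<^sup>2)) has_field_derivative
     qv (qd L) \<eta> t * exp (- complex_of_real t * \<eta>\<^sup>2)) (at \<eta>)"
proof -
  have "((\<lambda>\<eta>. qv L \<eta> t * exp (- complex_of_real t * \<eta>\<^sup>2)) has_field_derivative
     (qv (qd L) \<eta> t + 2 * of_real t * \<eta> * qv L \<eta> t) * exp (- complex_of_real t * \<eta>\<^sup>2)
      + qv L \<eta> t * (exp (- complex_of_real t * \<eta>\<^sup>2) * (- complex_of_real t * (2 * \<eta>)))) (at \<eta>)"
    by (auto intro!: derivative_eq_intros qv_deriv simp: power2_eq_square)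
  then show ?thesis by (simp add: algebra_simps)
qed

lemma qv_cont: "continuous_on S (\<lambda>(\<eta>,t). qv L \<eta> t)"
  by (induction L rule: qd.induct) (auto intro!: continuous_intros simp: split_beta)

definition K :: "real \<Rightarrow> nat \<Rightarrow> complex \<Rightarrow> real \<Rightarrow> complex" where
  "K \<tau> n \<eta> s = qv ((qd ^^ n) [(1,2,0)]) \<eta> (\<tau> - s) * exp (- complex_of_real (\<tau> - s) * \<eta>\<^sup>2)"

lemma K_deriv: "((\<lambda>\<eta>. K \<tau> n \<eta> s) has_field_derivative K \<tau> (Suc n) \<eta> s) (at \<eta>)"
  unfolding K_def funpow.simps o_apply by (rule qv_exp_deriv)

lemma K_cont: "continuous_on S (\<lambda>(\<eta>,s). K \<tau> n \<eta> s)"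
proof -
  have "continuous_on S ((\<lambda>(\<eta>,t). qv ((qd ^^ n) [(1,2,0)]) \<eta> t) \<circ> (\<lambda>x. (fst x, \<tau> - snd x)))"
    by (rule continuous_on_compose) (auto intro!: continuous_intros qv_cont)
  then have "continuous_on S (\<lambda>x. qv ((qd ^^ n) [(1,2,0)]) (fst x) (\<tau> - snd x))"
    by (simp add: o_def)
  then show ?thesis unfolding K_def split_beta by (auto intro!: continuous_intros)
qed

lemma K0: "K \<tau> 0 \<eta> s = \<eta>\<^sup>2 * exp (- complex_of_real (\<tau> - s) * \<eta>\<^sup>2)"
  unfolding K_def by (simp add: power2_eq_square)



lemma gauss_cum_deriv: "(gauss_cum has_field_derivative exp (- (u\<^sup>2))) (at u)"
proof -
  define f where "f u t = exp (- ((complex_of_real t * u)\<^sup>2))" for u t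
  define f' where "f' u t = exp (- ((complex_of_real t * u)\<^sup>2)) * (- (2 * (complex_of_real t * u) * complex_of_real t))" for u t
  have df: "((\<lambda>u. f u t) has_field_derivative f' u t) (at u within UNIV)" for u t
    unfolding f_def f'_def by (auto intro!: derivative_eq_intros simp: power2_eq_square)
  have cf: "continuous_on X (\<lambda>(u,t). f u t)" for X unfolding f_def split_beta
    by (auto intro!: continuous_intros)
  have cf': "continuous_on X (\<lambda>(u,t). f' u t)" for X unfolding f'_def split_beta
    by (auto intro!: continuous_intros)
  have cf1: "continuous_on {0..1} (f u)" for u unfolding f_def by (auto intro!: continuous_intros)
  have cf1': "continuous_on {0..1} (f' u)" for u unfolding f'_def by (auto intro!: continuous_intros)
  have dI: "((\<lambda>u. integral (cbox 0 1) (f u)) has_field_derivative integral (cbox 0 1) (f' u)) (at u within UNIV)"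
    by (rule leibniz_rule_field_derivative[where fx=f']) (auto intro!: df integrable_continuous_interval cf1 cf')
  have dg: "(gauss_cum has_field_derivative (integral {0..1} (f u) + u * integral {0..1} (f' u))) (at u)"
  proof -
    have e: "gauss_cum = (\<lambda>u. complex_of_real (sqrt pi / 2) + u * integral {0..1} (f u))"
      unfolding gauss_cum_def f_def by auto
    show ?thesis unfolding e using dI by (auto intro!: derivative_eq_intros)
  qed
  have ftc: "((\<lambda>t. f u t + u * f' u t) has_integral (exp (- (u\<^sup>2)))) {0..1}"
  proof -
    have "((\<lambda>t. f u t + u * f' u t) has_integral
       ((\<lambda>t. complex_of_real t * f u t) 1 - (\<lambda>t. complex_of_real t * f u t) 0)) {0..1}"
    proof (rule fundamental_theorem_of_calculus)
      fix t :: real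
      have "((\<lambda>z. z * exp (- ((z * u)\<^sup>2))) has_field_derivative
          (1 * f u t + complex_of_real t * (exp (- ((complex_of_real t * u)\<^sup>2)) * (- (2 * (complex_of_real t * u) * u))))) (at (complex_of_real t))"
        unfolding f_def
        by (auto intro!: derivative_eq_intros simp: power2_eq_square)
      from has_vector_derivative_real_field[OF this]
      have "((\<lambda>t. complex_of_real t * f u t) has_vector_derivative
          (1 * f u t + complex_of_real t * (exp (- ((complex_of_real t * u)\<^sup>2)) * (- (2 * (complex_of_real t * u) * u))))) (at t within {0..1})"
        unfolding f_def .
      moreover have "1 * f u t + complex_of_real t * (exp (- ((complex_of_real t * u)\<^sup>2)) * (- (2 * (complex_of_real t * u) * u)))
           = f u t + u * f' u t" unfolding f'_def by (simp add: algebra_simps)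
      ultimately show "((\<lambda>t. complex_of_real t * f u t) has_vector_derivative f u t + u * f' u t) (at t within {0..1})"
        by metis
    qed simp
    then show ?thesis by (simp add: f_def)
  qed
  have "integral {0..1} (f u) + u * integral {0..1} (f' u) = integral {0..1} (\<lambda>t. f u t + u * f' u t)"
  proof -
    have i2: "(\<lambda>t. u * f' u t) integrable_on {0..1}"
      by (rule integrable_continuous_interval) (auto intro!: continuous_intros cf1')
    show ?thesis by (subst integral_add[OF integrable_continuous_interval[OF cf1] i2]) simp
  qed
  also have "\<dots> = exp (- (u\<^sup>2))" using ftc by (rule integral_unique)
  finally show ?thesis using dg by simp
qed

lemma gauss_cum_holo: "gauss_cum holomorphic_on UNIV"
  using gauss_cum_deriv by (auto simp: holomorphic_on_def field_differentiable_def)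

lemma deriv_gauss_cum: "deriv gauss_cum = (\<lambda>u. exp (- (u\<^sup>2)))"
  using gauss_cum_deriv by (auto intro!: ext DERIV_imp_deriv)

lemma gc_iter_deriv: "((deriv ^^ n) gauss_cum has_field_derivative (deriv ^^ Suc n) gauss_cum u) (at u)"
proof -
  have "(deriv ^^ n) gauss_cum holomorphic_on UNIV"
    by (rule holomorphic_higher_deriv[OF gauss_cum_holo]) auto
  then have "(deriv ^^ n) gauss_cum field_differentiable at u"
    using holomorphic_on_imp_differentiable_at by blast
  then show ?thesis
    by (simp add: DERIV_deriv_iff_field_differentiable)
qed

lemma gc_cont: "continuous_on S ((deriv ^^ n) gauss_cum)"
  by (rule holomorphic_on_imp_continuous_on, rule holomorphic_on_subset[OF holomorphic_higher_deriv[OF gauss_cum_holo]]) auto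



lemma norm_exp_neg_sq: "norm (exp (- (u\<^sup>2))) \<le> exp ((Im u)\<^sup>2)"
proof -
  have "Re (- (u\<^sup>2)) = (Im u)\<^sup>2 - (Re u)\<^sup>2" by (simp add: power2_eq_square)
  then have "norm (exp (- (u\<^sup>2))) = exp ((Im u)\<^sup>2 - (Re u)\<^sup>2)" by (simp add: norm_exp_eq_Re)
  also have "\<dots> \<le> exp ((Im u)\<^sup>2)" by simp
  finally show ?thesis .
qed

lemma arctan_int: 
  assumes "x \<noteq> 0"
  shows "((\<lambda>t. 1 / (1 + (t * x)\<^sup>2)) has_integral arctan x / x) {0..1}"
proof -
  have "((\<lambda>t. 1 / (1 + (t * x)\<^sup>2)) has_integral (arctan (1*x) / x - arctan (0*x) / x)) {0..1}"
  proof (rule fundamental_theorem_of_calculus)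
    fix t :: real
    have "((\<lambda>t. arctan (t * x) / x) has_real_derivative (inverse (1 + (t*x)\<^sup>2) * (1 * x)) / x) (at t within {0..1})"
      by (auto intro!: derivative_eq_intros DERIV_arctan[THEN DERIV_chain2])
    moreover have "(inverse (1 + (t*x)\<^sup>2) * (1 * x)) / x = 1 / (1 + (t * x)\<^sup>2)"
    proof -
      have "(inverse (1 + (t*x)\<^sup>2) * (1 * x)) / x = inverse (1 + (t*x)\<^sup>2)" using assms by simp
      then show ?thesis by (simp add: inverse_eq_divide)
    qed
    ultimately show "((\<lambda>t. arctan (t * x) / x) has_vector_derivative 1 / (1 + (t * x)\<^sup>2)) (at t within {0..1})"
      by (simp add: has_real_derivative_iff_has_vector_derivative)
  qed simp
  then show ?thesis by simp
qed

lemma gc_real_bound: "norm (gauss_cum (complex_of_real x)) \<le> sqrt pi / 2 + pi / 2"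
proof -
  define f where "f t = exp (- ((complex_of_real t * complex_of_real x)\<^sup>2))" for t
  have cf: "continuous_on {0..1} f" unfolding f_def by (auto intro!: continuous_intros)
  have nf: "norm (f t) \<le> 1 / (1 + (t * x)\<^sup>2)" for t
  proof -
    have "f t = complex_of_real (exp (- ((t * x)\<^sup>2)))" unfolding f_def
      by (simp add: exp_of_real[symmetric])
    then have "norm (f t) = exp (- ((t * x)\<^sup>2))" by simp
    also have "\<dots> = 1 / exp ((t * x)\<^sup>2)" by (simp add: exp_minus field_simps)
    also have "\<dots> \<le> 1 / (1 + (t * x)\<^sup>2)"
      by (rule divide_left_mono) (auto simp: add_pos_nonneg)
    finally show ?thesis .
  qed
  have "norm (complex_of_real x * integral {0..1} f) \<le> pi / 2"
  proof (cases "x = 0")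
    case True then show ?thesis by simp
  next
    case False
    have "norm (integral {0..1} f) \<le> integral {0..1} (\<lambda>t. 1 / (1 + (t * x)\<^sup>2))"
      by (rule Henstock_Kurzweil_Integration.integral_norm_bound_integral)
         (auto intro!: integrable_continuous_interval cf nf has_integral_integrable[OF arctan_int[OF False]])
    also have "\<dots> = arctan x / x" using arctan_int[OF False] by (rule integral_unique)
    finally have "norm (integral {0..1} f) \<le> arctan x / x" .
    then have "\<bar>x\<bar> * norm (integral {0..1} f) \<le> \<bar>x\<bar> * (arctan x / x)"
      by (rule mult_left_mono) auto
    then have "norm (complex_of_real x * integral {0..1} f) \<le> \<bar>x\<bar> * (arctan x / x)"
      by (simp add: norm_mult)
    also have "\<dots> = \<bar>arctan x\<bar>" using False
      by (cases "x > 0") (auto simp: abs_if field_simps arctan_less_zero_iff arctan_eq_zero_iff)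
    also have "\<dots> \<le> pi / 2" using arctan_bounded[of x] by auto
    finally show ?thesis .
  qed
  moreover have geq: "gauss_cum (complex_of_real x) = complex_of_real (sqrt pi / 2) + complex_of_real x * integral {0..1} f"
    unfolding gauss_cum_def f_def by simp
  moreover have "norm (complex_of_real (sqrt pi / 2)) = sqrt pi / 2" by simp
  ultimately show ?thesis unfolding geq
    using norm_triangle_ineq[of "complex_of_real (sqrt pi / 2)" "complex_of_real x * integral {0..1} f"]
    by linarith
qed

lemma gc_strip_bound:
  assumes "\<bar>Im u\<bar> \<le> B"
  shows "norm (gauss_cum u) \<le> sqrt pi / 2 + pi / 2 + exp (B\<^sup>2) * B"
proof -
  define S where "S = {w. Im w \<le> B} \<inter> {w. Im w \<ge> -B}"
  have cS: "convex S" unfolding S_def by (intro convex_Int convex_halfspace_Im_le convex_halfspace_Im_ge)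
  have "norm (gauss_cum u - gauss_cum (complex_of_real (Re u))) \<le> exp (B\<^sup>2) * norm (u - complex_of_real (Re u))"
  proof (rule field_differentiable_bound[OF cS])
    fix z assume "z \<in> S"
    then have "\<bar>Im z\<bar> \<le> B" unfolding S_def by auto
    then have "(Im z)\<^sup>2 \<le> B\<^sup>2" using power_mono[of "\<bar>Im z\<bar>" B 2] by simp
    then have "exp ((Im z)\<^sup>2) \<le> exp (B\<^sup>2)" by simp
    then show "norm (exp (- (z\<^sup>2))) \<le> exp (B\<^sup>2)" using norm_exp_neg_sq[of z] by linarith
  next
    fix z show "(gauss_cum has_field_derivative exp (- (z\<^sup>2))) (at z within S)"
      using gauss_cum_deriv by (rule has_field_derivative_at_within)
  qed (use assms in \<open>auto simp: S_def\<close>)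
  moreover have "norm (u - complex_of_real (Re u)) = \<bar>Im u\<bar>"
    by (simp add: complex_eq_iff norm_complex_def)
  ultimately have "norm (gauss_cum u - gauss_cum (complex_of_real (Re u))) \<le> exp (B\<^sup>2) * \<bar>Im u\<bar>"
    by simp
  moreover have "exp (B\<^sup>2) * \<bar>Im u\<bar> \<le> exp (B\<^sup>2) * B" using assms by (intro mult_left_mono) auto
  ultimately have "norm (gauss_cum u - gauss_cum (complex_of_real (Re u))) \<le> exp (B\<^sup>2) * B"
    by linarith
  then show ?thesis using gc_real_bound[of "Re u"] norm_triangle_ineq2[of "gauss_cum u" "gauss_cum (complex_of_real (Re u))"]
    by linarith
qed

lemma cauchy_all:
  assumes "f holomorphic_on UNIV" "r > 0" "\<And>w. w \<in> ball z r \<Longrightarrow> norm (f w) < B"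
  shows "norm ((deriv ^^ n) f z) \<le> fact n * B / r ^ n"
proof (cases "n = 0")
  case True then show ?thesis using assms(2) assms(3)[of z] by simp
next
  case False
  show ?thesis
    by (rule Cauchy_higher_deriv_bound[where y=0])
       (use assms False in \<open>auto intro: holomorphic_on_subset holomorphic_on_imp_continuous_on\<close>)
qed

lemma gc_deriv_bound: "\<exists>M. \<forall>u. \<bar>Im u\<bar> \<le> B \<longrightarrow> norm ((deriv ^^ n) gauss_cum u) \<le> M"
proof (cases n)
  case 0 then show ?thesis using gc_strip_bound by auto
next
  case (Suc m)
  have e: "(deriv ^^ n) gauss_cum = (deriv ^^ m) (\<lambda>u. exp (- (u\<^sup>2)))"
    unfolding Suc funpow_Suc_right o_apply deriv_gauss_cum ..
  have h: "(\<lambda>u. exp (- (u\<^sup>2))) holomorphic_on UNIV" by (auto intro!: holomorphic_intros)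
  have "norm ((deriv ^^ m) (\<lambda>u. exp (- (u\<^sup>2))) u) \<le> fact m * (exp ((\<bar>B\<bar>+1)\<^sup>2) + 1) / 1 ^ m"
    if "\<bar>Im u\<bar> \<le> B" for u
  proof (rule cauchy_all[OF h])
    fix w assume "w \<in> ball u 1"
    then have "\<bar>Im w - Im u\<bar> < 1" using abs_Im_le_cmod[of "u - w"] by (auto simp: dist_norm)
    then have "\<bar>Im w\<bar> \<le> \<bar>B\<bar> + 1" using that by linarith
    then have "(Im w)\<^sup>2 \<le> (\<bar>B\<bar>+1)\<^sup>2" using power_mono[of "\<bar>Im w\<bar>" "\<bar>B\<bar>+1" 2] by simp
    then have "exp ((Im w)\<^sup>2) \<le> exp ((\<bar>B\<bar>+1)\<^sup>2)" by simp
    then show "norm (exp (- (w\<^sup>2))) < exp ((\<bar>B\<bar>+1)\<^sup>2) + 1"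
      using norm_exp_neg_sq[of w] by linarith
  qed simp
  then show ?thesis unfolding e by auto
qed



definition cw :: "real \<Rightarrow> real \<Rightarrow> real" where "cw a s = exp (s * a\<^sup>2) / sqrt pi"
definition uu :: "real \<Rightarrow> real \<Rightarrow> complex \<Rightarrow> complex" where
  "uu a s z = (z - complex_of_real (2 * s * a)) / complex_of_real (sqrt (4 * s))"
definition wn :: "real \<Rightarrow> nat \<Rightarrow> real \<Rightarrow> complex \<Rightarrow> complex" where
  "wn a n s z = complex_of_real (cw a s) * (1 / complex_of_real (sqrt (4 * s)))^n * (deriv ^^ n) gauss_cum (uu a s z)"

lemma w_fun_wn: "w_fun a s z = wn a 0 s z"
  unfolding w_fun_def wn_def cw_def uu_def by simp

lemma wn_deriv: "((\<lambda>z. wn a n s z) has_field_derivative wn a (Suc n) s z) (at z)"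
proof -
  have du: "((\<lambda>z. uu a s z) has_field_derivative 1 / complex_of_real (sqrt (4 * s))) (at z)"
  proof -
    have "((\<lambda>z. (z - complex_of_real (2 * s * a)) * (1 / complex_of_real (sqrt (4 * s)))) has_field_derivative
          (1 - 0) * (1 / complex_of_real (sqrt (4 * s)))) (at z)"
      by (rule DERIV_cmult_right, rule DERIV_diff, rule DERIV_ident, rule DERIV_const)
    then show ?thesis unfolding uu_def by simp
  qed
  have "((\<lambda>z. (deriv^^n) gauss_cum (uu a s z)) has_field_derivative
      (deriv^^Suc n) gauss_cum (uu a s z) * (1 / complex_of_real (sqrt (4 * s)))) (at z)"
    by (rule DERIV_chain2[OF gc_iter_deriv du])
  from DERIV_cmult[OF this, of "complex_of_real (cw a s) * (1 / complex_of_real (sqrt (4 * s)))^n"]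
  show ?thesis unfolding wn_def by (simp add: algebra_simps)
qed

lemma wn_cont: 
  assumes "0 < \<tau>0"
  shows "continuous_on (UNIV \<times> {\<tau>0..\<tau>}) (\<lambda>(z,s). wn a n s z)"
proof -
  have cu: "continuous_on (UNIV \<times> {\<tau>0..\<tau>}) (\<lambda>x. uu a (snd x) (fst x))"
    unfolding uu_def using assms by (auto intro!: continuous_intros)
  have "continuous_on (UNIV \<times> {\<tau>0..\<tau>}) (\<lambda>x. (deriv ^^ n) gauss_cum (uu a (snd x) (fst x)))"
    by (rule continuous_on_compose2[OF gc_cont[of UNIV] cu]) auto
  then show ?thesis unfolding wn_def cw_def split_beta using assms
    by (auto intro!: continuous_intros)
qed

lemma wn_bound:
  assumes "0 < \<tau>0" "b > 0"
  shows "\<exists>M. \<forall>s\<in>{\<tau>0..\<tau>}. \<forall>z. \<bar>Im z\<bar> < b \<longrightarrow> norm (wn a n s z) \<le> M"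
proof -
  obtain M0 where M0: "\<And>u. \<bar>Im u\<bar> \<le> b / sqrt (4 * \<tau>0) \<Longrightarrow> norm ((deriv ^^ n) gauss_cum u) \<le> M0"
    using gc_deriv_bound by blast
  show ?thesis
  proof (intro exI ballI allI impI)
    fix s z assume s: "s \<in> {\<tau>0..\<tau>}" and z: "\<bar>Im z\<bar> < b"
    have sp: "s > 0" using s assms by auto
    have "Im (uu a s z) = Im z / sqrt (4 * s)" unfolding uu_def by (simp add: Im_divide_of_real)
    then have "\<bar>Im (uu a s z)\<bar> = \<bar>Im z\<bar> / sqrt (4 * s)" using sp by simp
    also have "\<dots> \<le> b / sqrt (4 * s)" using z sp by (intro divide_right_mono) auto
    also have "\<dots> \<le> b / sqrt (4 * \<tau>0)" using s assms by (intro divide_left_mono) auto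
    finally have g: "norm ((deriv ^^ n) gauss_cum (uu a s z)) \<le> M0" by (rule M0)
    have c: "cw a s \<le> exp (\<tau> * a\<^sup>2) / sqrt pi" unfolding cw_def using s
      by (intro divide_right_mono) (auto intro!: mult_right_mono)
    have p: "(1 / sqrt (4 * s))^n \<le> (1 / sqrt (4 * \<tau>0))^n" using s assms
      by (intro power_mono divide_left_mono) auto
    have "norm (wn a n s z) = cw a s * (1 / sqrt (4 * s))^n * norm ((deriv ^^ n) gauss_cum (uu a s z))"
      unfolding wn_def using sp by (simp add: norm_mult norm_power cw_def norm_divide)
    also have "\<dots> \<le> exp (\<tau> * a\<^sup>2) / sqrt pi * (1 / sqrt (4 * \<tau>0))^n * M0"
      using c p g s assms by (intro mult_mono) (auto simp: cw_def intro!: divide_nonneg_nonneg mult_nonneg_nonneg zero_le_power)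
    finally show "norm (wn a n s z) \<le> exp (\<tau> * a\<^sup>2) / sqrt pi * (1 / sqrt (4 * \<tau>0))^n * M0" .
  qed
qed

lemma vderiv_iter:
  assumes "\<And>n \<eta>. (F n has_field_derivative F (Suc n) \<eta>) (at \<eta>)"
  shows "(vderiv ^^ n) (\<lambda>\<xi>. F 0 (complex_of_real \<xi> + c)) = (\<lambda>\<xi>. F n (complex_of_real \<xi> + c))"
proof (induction n)
  case 0 then show ?case by simp
next
  case (Suc n)
  have "vderiv (\<lambda>\<xi>. F n (complex_of_real \<xi> + c)) \<xi> = F (Suc n) (complex_of_real \<xi> + c)" for \<xi>
  proof -
    have d1: "((\<lambda>z. z + c) has_field_derivative 1) (at (complex_of_real \<xi>))"
      by (auto intro!: derivative_eq_intros)
    have "((\<lambda>z. F n (z + c)) has_field_derivative F (Suc n) (complex_of_real \<xi> + c) * 1) (at (complex_of_real \<xi>))"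
      by (rule DERIV_chain2[OF assms d1])
    from has_vector_derivative_real_field[OF this]
    show ?thesis unfolding vderiv_def by (simp add: vector_derivative_at)
  qed
  then show ?case unfolding funpow.simps o_apply Suc.IH by (intro ext) 
qed

lemma norm_K0: "norm (K \<tau> 0 \<eta> s) = (norm \<eta>)\<^sup>2 * exp (- (\<tau> - s) * Re (\<eta>\<^sup>2))"
  unfolding K0 by (simp add: norm_mult norm_power norm_exp_eq_Re)

lemma exp_int:
  fixes c \<tau> \<tau>0 :: real
  assumes "c > 0" "\<tau>0 \<le> \<tau>"
  shows "((\<lambda>s. exp (- (\<tau> - s) * c)) has_integral (1 - exp (- (\<tau> - \<tau>0) * c)) / c) {\<tau>0..\<tau>}"
proof -
  have "((\<lambda>s. exp (- (\<tau> - s) * c)) has_integral ((\<lambda>s. exp (- (\<tau> - s) * c) / c) \<tau> - (\<lambda>s. exp (- (\<tau> - s) * c) / c) \<tau>0)) {\<tau>0..\<tau>}"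
  proof (rule fundamental_theorem_of_calculus[where f="\<lambda>s::real. exp (- (\<tau> - s) * c) / c"])
    fix s :: real
    have "((\<lambda>s. exp (- (\<tau> - s) * c) / c) has_real_derivative exp (- (\<tau> - s) * c) * c / c) (at s within {\<tau>0..\<tau>})"
      by (auto intro!: derivative_eq_intros)
    then show "((\<lambda>s. exp (- (\<tau> - s) * c) / c) has_vector_derivative exp (- (\<tau> - s) * c)) (at s within {\<tau>0..\<tau>})"
      using assms by (simp add: has_real_derivative_iff_has_vector_derivative)
  qed (use assms in auto)
  then show ?thesis by (simp add: diff_divide_distrib)
qed

lemma psi_bound_gen:
  assumes "\<tau>0 \<le> \<tau>" "continuous_on {\<tau>0..\<tau>} g" "\<And>s. s\<in>{\<tau>0..\<tau>} \<Longrightarrow> norm (g s) \<le> M"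
  shows "norm (integral {\<tau>0..\<tau>} (\<lambda>s. K \<tau> 0 \<eta> s * g s)) \<le> (\<tau> - \<tau>0) * (M * (norm \<eta>)\<^sup>2 * exp ((\<tau>-\<tau>0) * (norm \<eta>)\<^sup>2))"
proof -
  have ck: "continuous_on {\<tau>0..\<tau>} (\<lambda>s. K \<tau> 0 \<eta> s)"
    unfolding K0 by (auto intro!: continuous_intros)
  have "norm (integral {\<tau>0..\<tau>} (\<lambda>s. K \<tau> 0 \<eta> s * g s)) \<le> integral {\<tau>0..\<tau>} (\<lambda>s. M * (norm \<eta>)\<^sup>2 * exp ((\<tau>-\<tau>0) * (norm \<eta>)\<^sup>2))"
  proof (rule Henstock_Kurzweil_Integration.integral_norm_bound_integral)
    show "(\<lambda>s. K \<tau> 0 \<eta> s * g s) integrable_on {\<tau>0..\<tau>}"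
      by (rule integrable_continuous_interval) (auto intro!: continuous_intros ck assms(2))
    fix s assume s: "s \<in> {\<tau>0..\<tau>}"
    have "- (\<tau> - s) * Re (\<eta>\<^sup>2) \<le> (\<tau>-\<tau>0) * (norm \<eta>)\<^sup>2"
    proof -
      have "\<bar>Re (\<eta>\<^sup>2)\<bar> \<le> (norm \<eta>)\<^sup>2" using abs_Re_le_cmod[of "\<eta>\<^sup>2"] by (simp add: norm_power)
      then have "(\<tau> - s) * (- Re (\<eta>\<^sup>2)) \<le> (\<tau> - s) * (norm \<eta>)\<^sup>2" using s
        by (intro mult_left_mono) auto
      then have "- (\<tau> - s) * Re (\<eta>\<^sup>2) \<le> (\<tau> - s) * (norm \<eta>)\<^sup>2" by (metis mult_minus_left mult_minus_right)
      also have "\<dots> \<le> (\<tau>-\<tau>0) * (norm \<eta>)\<^sup>2" using s by (intro mult_right_mono) auto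
      finally show ?thesis .
    qed
    then have "exp (- (\<tau> - s) * Re (\<eta>\<^sup>2)) \<le> exp ((\<tau>-\<tau>0) * (norm \<eta>)\<^sup>2)" by simp
    moreover have "M \<ge> 0" using assms(3)[OF s] norm_ge_zero order_trans by blast
    ultimately have "(norm \<eta>)\<^sup>2 * exp (- (\<tau> - s) * Re (\<eta>\<^sup>2)) * norm (g s) \<le> (norm \<eta>)\<^sup>2 * exp ((\<tau>-\<tau>0) * (norm \<eta>)\<^sup>2) * M"
      using assms(3)[OF s] by (intro mult_mono) auto
    then show "norm (K \<tau> 0 \<eta> s * g s) \<le> M * (norm \<eta>)\<^sup>2 * exp ((\<tau>-\<tau>0) * (norm \<eta>)\<^sup>2)"
      unfolding norm_mult norm_K0 by (simp add: ac_simps)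
  qed auto
  also have "\<dots> = (\<tau> - \<tau>0) * (M * (norm \<eta>)\<^sup>2 * exp ((\<tau>-\<tau>0) * (norm \<eta>)\<^sup>2))"
    using assms(1) by simp
  finally show ?thesis .
qed

lemma psi_bound_pos:
  assumes "\<tau>0 \<le> \<tau>" "continuous_on {\<tau>0..\<tau>} g" "\<And>s. s\<in>{\<tau>0..\<tau>} \<Longrightarrow> norm (g s) \<le> M"
    and c: "Re (\<eta>\<^sup>2) > 0"
  shows "norm (integral {\<tau>0..\<tau>} (\<lambda>s. K \<tau> 0 \<eta> s * g s)) \<le> M * (norm \<eta>)\<^sup>2 / Re (\<eta>\<^sup>2)"
proof -
  have ck: "continuous_on {\<tau>0..\<tau>} (\<lambda>s. K \<tau> 0 \<eta> s)"
    unfolding K0 by (auto intro!: continuous_intros)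
  have hi: "((\<lambda>s. M * (norm \<eta>)\<^sup>2 * exp (- (\<tau> - s) * Re (\<eta>\<^sup>2))) has_integral
      M * (norm \<eta>)\<^sup>2 * ((1 - exp (- (\<tau> - \<tau>0) * Re (\<eta>\<^sup>2))) / Re (\<eta>\<^sup>2))) {\<tau>0..\<tau>}"
    by (rule has_integral_mult_right[OF exp_int[OF c assms(1)]])
  have M: "M \<ge> 0" using assms(3)[of \<tau>] assms(1) by (meson atLeastAtMost_iff norm_ge_zero order_refl order_trans)
  have "norm (integral {\<tau>0..\<tau>} (\<lambda>s. K \<tau> 0 \<eta> s * g s)) \<le> integral {\<tau>0..\<tau>} (\<lambda>s. M * (norm \<eta>)\<^sup>2 * exp (- (\<tau> - s) * Re (\<eta>\<^sup>2)))"
  proof (rule Henstock_Kurzweil_Integration.integral_norm_bound_integral)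
    show "(\<lambda>s. K \<tau> 0 \<eta> s * g s) integrable_on {\<tau>0..\<tau>}"
      by (rule integrable_continuous_interval) (auto intro!: continuous_intros ck assms(2))
    show "(\<lambda>s. M * (norm \<eta>)\<^sup>2 * exp (- (\<tau> - s) * Re (\<eta>\<^sup>2))) integrable_on {\<tau>0..\<tau>}"
      using hi by blast
    fix s assume s: "s \<in> {\<tau>0..\<tau>}"
    show "norm (K \<tau> 0 \<eta> s * g s) \<le> M * (norm \<eta>)\<^sup>2 * exp (- (\<tau> - s) * Re (\<eta>\<^sup>2))"
    proof -
      have "(norm \<eta>)\<^sup>2 * exp (- (\<tau> - s) * Re (\<eta>\<^sup>2)) * norm (g s) \<le> (norm \<eta>)\<^sup>2 * exp (- (\<tau> - s) * Re (\<eta>\<^sup>2)) * M"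
        using assms(3)[OF s] by (intro mult_left_mono) auto
      then show ?thesis unfolding norm_mult norm_K0 by (simp add: ac_simps)
    qed
  qed
  also have "\<dots> = M * (norm \<eta>)\<^sup>2 * ((1 - exp (- (\<tau> - \<tau>0) * Re (\<eta>\<^sup>2))) / Re (\<eta>\<^sup>2))"
    using hi by (rule integral_unique)
  also have "\<dots> \<le> M * (norm \<eta>)\<^sup>2 * (1 / Re (\<eta>\<^sup>2))"
    using M c by (intro mult_left_mono divide_right_mono) auto
  finally show ?thesis by simp
qed



lemma jbr_pos: "jbr \<xi> > 0" unfolding jbr_def by (simp add: add_pos_nonneg)

lemma jbr_powr: "jbr \<xi> powr (- real n) = 1 / jbr \<xi> ^ n"
  using jbr_pos[of \<xi>] by (simp add: powr_minus powr_realpow divide_inverse)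

lemma psi_holo:
  assumes "continuous_on {\<tau>0..\<tau>} g"
  shows "(\<lambda>\<eta>. integral {\<tau>0..\<tau>} (\<lambda>s. K \<tau> n \<eta> s * g s)) holomorphic_on UNIV"
    and "\<And>\<eta>. ((\<lambda>\<eta>. integral {\<tau>0..\<tau>} (\<lambda>s. K \<tau> n \<eta> s * g s)) has_field_derivative
            integral {\<tau>0..\<tau>} (\<lambda>s. K \<tau> (Suc n) \<eta> s * g s)) (at \<eta>)"
    and "(deriv ^^ n) (\<lambda>\<eta>. integral {\<tau>0..\<tau>} (\<lambda>s. K \<tau> 0 \<eta> s * g s)) = (\<lambda>\<eta>. integral {\<tau>0..\<tau>} (\<lambda>s. K \<tau> n \<eta> s * g s))"
proof -
  define W where "W n \<eta> s = K \<tau> n \<eta> s * g s" for n \<eta> s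
  have d: "((\<lambda>\<eta>. W n \<eta> s) has_field_derivative W (Suc n) \<eta> s) (at \<eta>)" for n \<eta> s
    unfolding W_def by (rule DERIV_cmult_right, rule K_deriv)
  have cg: "continuous_on (UNIV \<times> {\<tau>0..\<tau>}) (\<lambda>x. g (snd x))"
    by (rule continuous_on_compose2[OF assms]) (auto intro!: continuous_intros)
  have c: "continuous_on (UNIV \<times> {\<tau>0..\<tau>}) (\<lambda>(\<eta>,s). W n \<eta> s)" for n
    unfolding W_def split_beta using K_cont[of "UNIV \<times> {\<tau>0..\<tau>}" \<tau> n] cg
    by (auto intro!: continuous_intros simp: split_beta)
  show "\<And>\<eta>. ((\<lambda>\<eta>. integral {\<tau>0..\<tau>} (\<lambda>s. K \<tau> n \<eta> s * g s)) has_field_derivative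
            integral {\<tau>0..\<tau>} (\<lambda>s. K \<tau> (Suc n) \<eta> s * g s)) (at \<eta>)"
    using int_hasderiv[of \<tau>0 \<tau> W, OF _ c, of n] d unfolding W_def by blast
  then show "(\<lambda>\<eta>. integral {\<tau>0..\<tau>} (\<lambda>s. K \<tau> n \<eta> s * g s)) holomorphic_on UNIV"
    by (auto simp: holomorphic_on_def field_differentiable_def)
  show "(deriv ^^ n) (\<lambda>\<eta>. integral {\<tau>0..\<tau>} (\<lambda>s. K \<tau> 0 \<eta> s * g s)) = (\<lambda>\<eta>. integral {\<tau>0..\<tau>} (\<lambda>s. K \<tau> n \<eta> s * g s))"
    using int_deriv_iter[of \<tau>0 \<tau> W, OF _ c, of n] d unfolding W_def by blast
qed

lemma psi_deriv_bound:
  assumes "0 < \<tau>0" "\<tau>0 < \<tau>" "0 \<le> M"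
  shows "\<exists>C>0. \<forall>(g::real \<Rightarrow> complex) \<xi>. continuous_on {\<tau>0..\<tau>} g \<longrightarrow> (\<forall>s\<in>{\<tau>0..\<tau>}. norm (g s) \<le> M) \<longrightarrow>
     norm ((deriv ^^ n) (\<lambda>\<eta>. integral {\<tau>0..\<tau>} (\<lambda>s. K \<tau> 0 \<eta> s * g s)) (complex_of_real \<xi> + \<i> * complex_of_real a))
       \<le> C * jbr \<xi> powr (- real n)"
proof -
  define R where "R = 8 * \<bar>a\<bar> + 8"
  define \<rho> where "\<rho> = R + \<bar>a\<bar> + 1"
  define T where "T = \<tau> - \<tau>0"
  define B1 where "B1 = T * (M * \<rho>\<^sup>2 * exp (T * \<rho>\<^sup>2)) + 1"
  define B2 where "B2 = 2 * M + 1"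
  define C1 where "C1 = fact n * B2 * 8 ^ n"
  define C2 where "C2 = fact n * B1 * (1 + R) ^ n"
  have T: "T > 0" unfolding T_def using assms by simp
  have R: "R \<ge> 8" unfolding R_def by simp
  have B1: "B1 > 0" unfolding B1_def using T assms by (intro add_nonneg_pos mult_nonneg_nonneg) auto
  have B2: "B2 > 0" unfolding B2_def using assms by simp
  have C1: "C1 > 0" unfolding C1_def using B2 by simp
  have C2: "C2 > 0" unfolding C2_def using B1 R by simp
  show ?thesis
  proof (intro exI[of _ "C1 + C2"] conjI allI impI)
    show "C1 + C2 > 0" using C1 C2 by simp
    fix g :: "real \<Rightarrow> complex" and \<xi> :: real assume cg: "continuous_on {\<tau>0..\<tau>} g" and gb: "\<forall>s\<in>{\<tau>0..\<tau>}. norm (g s) \<le> M"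
    define \<Psi> where "\<Psi> = (\<lambda>\<eta>. integral {\<tau>0..\<tau>} (\<lambda>s. K \<tau> 0 \<eta> s * g s))"
    define \<zeta> where "\<zeta> = complex_of_real \<xi> + \<i> * complex_of_real a"
    have hol: "\<Psi> holomorphic_on UNIV" unfolding \<Psi>_def by (rule psi_holo(1)[OF cg])
    have Re\<zeta>: "Re \<zeta> = \<xi>" and Im\<zeta>: "Im \<zeta> = a" unfolding \<zeta>_def by simp_all
    have jp: "jbr \<xi> > 0" by (rule jbr_pos)
    have key: "norm ((deriv ^^ n) \<Psi> \<zeta>) \<le> (C1 + C2) / jbr \<xi> ^ n"
    proof (cases "\<bar>\<xi>\<bar> \<ge> R")
      case True
      define r where "r = \<bar>\<xi>\<bar> / 4"
      have r: "r > 0" unfolding r_def using True R by simp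
      have bnd: "norm (\<Psi> w) < B2" if w: "w \<in> ball \<zeta> r" for w
      proof -
        have "norm (w - \<zeta>) < r" using w by (simp add: dist_norm norm_minus_commute)
        then have hx: "\<bar>Re w - \<xi>\<bar> < r" and hy: "\<bar>Im w - a\<bar> < r"
          using abs_Re_le_cmod[of "w - \<zeta>"] abs_Im_le_cmod[of "w - \<zeta>"] Re\<zeta> Im\<zeta> by auto
        have ax: "\<bar>Re w\<bar> \<ge> 3 * \<bar>\<xi>\<bar> / 4" using hx unfolding r_def by linarith
        have ay: "\<bar>Im w\<bar> \<le> 3 * \<bar>\<xi>\<bar> / 8" using hy True unfolding r_def R_def by linarith
        have "(3 * \<bar>\<xi>\<bar> / 4)\<^sup>2 \<le> (Re w)\<^sup>2" using power_mono[OF ax, of 2] by simp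
        then have a1: "9 * \<xi>\<^sup>2 \<le> 16 * (Re w)\<^sup>2" by (simp add: power_divide power_mult_distrib)
        have "(Im w)\<^sup>2 \<le> (3 * \<bar>\<xi>\<bar> / 8)\<^sup>2" using power_mono[OF ay, of 2] by simp
        then have a2: "64 * (Im w)\<^sup>2 \<le> 9 * \<xi>\<^sup>2" by (simp add: power_divide power_mult_distrib)
        have a3: "\<xi>\<^sup>2 > 0" using True R by auto
        have h1: "3 * (Im w)\<^sup>2 \<le> (Re w)\<^sup>2" and h2: "(Im w)\<^sup>2 < (Re w)\<^sup>2"
          using a1 a2 a3 by linarith+
        have pos: "Re (w\<^sup>2) > 0" using h2 by (simp add: Re_power2)
        have le2: "(norm w)\<^sup>2 \<le> 2 * Re (w\<^sup>2)" using h1 by (simp add: Re_power2 cmod_power2)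
        have "norm (\<Psi> w) \<le> M * (norm w)\<^sup>2 / Re (w\<^sup>2)"
          unfolding \<Psi>_def using assms cg gb pos by (intro psi_bound_pos) auto
        also have "\<dots> \<le> M * 2" 
        proof -
          have "M * (norm w)\<^sup>2 \<le> M * (2 * Re (w\<^sup>2))" using le2 assms(3) by (rule mult_left_mono)
          then show ?thesis using pos by (simp add: divide_le_eq mult.assoc)
        qed
        finally show ?thesis unfolding B2_def by simp
      qed
      have "norm ((deriv ^^ n) \<Psi> \<zeta>) \<le> fact n * B2 / r ^ n"
        by (rule cauchy_all[OF hol r bnd])
      also have "\<dots> = C1 / (8 * r) ^ n" unfolding C1_def using r by (simp add: power_mult_distrib)
      also have "\<dots> \<le> C1 / jbr \<xi> ^ n"
      proof (rule divide_left_mono)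
        have "jbr \<xi> \<le> 8 * r"
        proof -
          have "1 \<le> \<bar>\<xi>\<bar>" using True R by linarith
          then have "1\<^sup>2 \<le> \<bar>\<xi>\<bar>\<^sup>2" by (intro power_mono) auto
          then have "1 + \<xi>\<^sup>2 \<le> 4 * \<xi>\<^sup>2" by simp
          then have "1 + \<xi>\<^sup>2 \<le> (2 * \<bar>\<xi>\<bar>)\<^sup>2" by (simp add: power_mult_distrib)
          then have "jbr \<xi> \<le> sqrt ((2 * \<bar>\<xi>\<bar>)\<^sup>2)" unfolding jbr_def by (rule real_sqrt_le_mono)
          then have "jbr \<xi> \<le> \<bar>2 * \<bar>\<xi>\<bar>\<bar>" by (simp only: real_sqrt_abs)
          then show ?thesis unfolding r_def by simp
        qed
        then show "jbr \<xi> ^ n \<le> (8 * r) ^ n" using jp by (intro power_mono) auto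
      qed (use C1 jp r in auto)
      also have "\<dots> \<le> (C1 + C2) / jbr \<xi> ^ n" using C2 jp by (simp add: divide_right_mono)
      finally show ?thesis .
    next
      case False
      have bnd: "norm (\<Psi> w) < B1" if w: "w \<in> ball \<zeta> 1" for w
      proof -
        have "norm (w - \<zeta>) < 1" using w by (simp add: dist_norm norm_minus_commute)
        moreover have "norm \<zeta> \<le> \<bar>\<xi>\<bar> + \<bar>a\<bar>" unfolding \<zeta>_def
          using norm_triangle_ineq[of "complex_of_real \<xi>" "\<i> * complex_of_real a"] by (simp add: norm_mult)
        ultimately have "norm w \<le> \<rho>" using False norm_triangle_ineq[of "w - \<zeta>" \<zeta>] unfolding \<rho>_def by simp
        then have nw: "(norm w)\<^sup>2 \<le> \<rho>\<^sup>2" by (simp add: power_mono)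
        have "norm (\<Psi> w) \<le> T * (M * (norm w)\<^sup>2 * exp (T * (norm w)\<^sup>2))"
          unfolding \<Psi>_def T_def using assms cg gb by (intro psi_bound_gen) auto
        also have "\<dots> \<le> T * (M * \<rho>\<^sup>2 * exp (T * \<rho>\<^sup>2))"
          using nw T assms by (intro mult_left_mono mult_mono) auto
        finally show ?thesis unfolding B1_def by simp
      qed
      have "norm ((deriv ^^ n) \<Psi> \<zeta>) \<le> fact n * B1 / 1 ^ n"
        by (rule cauchy_all[OF hol _ bnd]) simp
      also have "\<dots> = C2 / (1 + R) ^ n" unfolding C2_def using R by simp
      also have "\<dots> \<le> C2 / jbr \<xi> ^ n"
      proof (rule divide_left_mono)
        have "jbr \<xi> \<le> 1 + R"
        proof -
          have "\<bar>\<xi>\<bar>\<^sup>2 \<le> R\<^sup>2" using False by (intro power_mono) auto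
          then have "\<xi>\<^sup>2 \<le> R\<^sup>2" by simp
          moreover have "(1 + R)\<^sup>2 = 1 + 2 * R + R\<^sup>2" by (simp add: power2_eq_square algebra_simps)
          ultimately have "1 + \<xi>\<^sup>2 \<le> (1 + R)\<^sup>2" using R by linarith
          then have "jbr \<xi> \<le> sqrt ((1 + R)\<^sup>2)" unfolding jbr_def by (rule real_sqrt_le_mono)
          then have "jbr \<xi> \<le> \<bar>1 + R\<bar>" by (simp only: real_sqrt_abs)
          then show ?thesis using R by simp
        qed
        then show "jbr \<xi> ^ n \<le> (1 + R) ^ n" using jp by (intro power_mono) auto
      qed (use C2 jp R in auto)
      also have "\<dots> \<le> (C1 + C2) / jbr \<xi> ^ n" using C1 jp by (simp add: divide_right_mono)
      finally show ?thesis .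
    qed
    then show "norm ((deriv ^^ n) (\<lambda>\<eta>. integral {\<tau>0..\<tau>} (\<lambda>s. K \<tau> 0 \<eta> s * g s)) (complex_of_real \<xi> + \<i> * complex_of_real a))
       \<le> (C1 + C2) * jbr \<xi> powr (- real n)"
      unfolding jbr_powr \<Psi>_def \<zeta>_def by simp
  qed
qed



lemma wn_cont_s: "0 < \<tau>0 \<Longrightarrow> continuous_on {\<tau>0..\<tau>} (\<lambda>s. wn a n s z)"
  by (rule continuous_on_compose2[OF wn_cont[of \<tau>0 \<tau> a n], where f="\<lambda>s. (z,s)", simplified])
     (auto intro!: continuous_intros)

lemma p_sym_eq: "p_sym a \<tau>0 \<tau> z \<xi> = integral {\<tau>0..\<tau>} (\<lambda>s. K \<tau> 0 (complex_of_real \<xi> + \<i> * complex_of_real a) s * w_fun a s z)"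
  unfolding p_sym_def K0 integral_mult_right[symmetric] by (simp add: mult.assoc)

lemma part1:
  fixes a \<tau>0 \<tau> b :: real
  assumes "0 < \<tau>0" "\<tau>0 < \<tau>" "b > 0"
  shows "\<exists>C>0. \<forall>z \<xi>. \<bar>Im z\<bar> < b \<longrightarrow> norm (((deriv ^^ \<alpha>) (\<lambda>z'. (vderiv ^^ \<beta>) (\<lambda>\<xi>'. p_sym a \<tau>0 \<tau> z' \<xi>') \<xi>)) z)
              \<le> C * jbr \<xi> powr (- real \<beta>)"
proof -
  obtain M where M: "\<And>s z. s\<in>{\<tau>0..\<tau>} \<Longrightarrow> \<bar>Im z\<bar> < b \<Longrightarrow> norm (wn a \<alpha> s z) \<le> M"
    using wn_bound[OF assms(1,3), of \<tau> a \<alpha>] by blast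
  have "norm (wn a \<alpha> \<tau>0 0) \<le> M" using M[of \<tau>0 0] assms by simp
  then have M0: "M \<ge> 0" by (rule order_trans[OF norm_ge_zero])
  obtain C where C: "C > 0" and Cb: "\<And>(g::real \<Rightarrow> complex) \<xi>. continuous_on {\<tau>0..\<tau>} g \<Longrightarrow> (\<forall>s\<in>{\<tau>0..\<tau>}. norm (g s) \<le> M) \<Longrightarrow>
     norm ((deriv ^^ \<beta>) (\<lambda>\<eta>. integral {\<tau>0..\<tau>} (\<lambda>s. K \<tau> 0 \<eta> s * g s)) (complex_of_real \<xi> + \<i> * complex_of_real a))
       \<le> C * jbr \<xi> powr (- real \<beta>)"
    using psi_deriv_bound[OF assms(1,2) M0, of \<beta> a] by blast
  show ?thesis
  proof (intro exI[of _ C] conjI allI impI)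
    show "C > 0" by fact
    fix z \<xi> assume z: "\<bar>Im z\<bar> < b"
    define \<zeta> where "\<zeta> = complex_of_real \<xi> + \<i> * complex_of_real a"
    have e2: "(vderiv ^^ \<beta>) (\<lambda>\<xi>'. p_sym a \<tau>0 \<tau> z' \<xi>') \<xi> = integral {\<tau>0..\<tau>} (\<lambda>s. K \<tau> \<beta> \<zeta> s * wn a 0 s z')" for z'
    proof -
      have "(vderiv ^^ \<beta>) (\<lambda>\<xi>'. (\<lambda>n \<eta>. integral {\<tau>0..\<tau>} (\<lambda>s. K \<tau> n \<eta> s * w_fun a s z')) 0 (complex_of_real \<xi>' + \<i> * complex_of_real a))
          = (\<lambda>\<xi>'. (\<lambda>n \<eta>. integral {\<tau>0..\<tau>} (\<lambda>s. K \<tau> n \<eta> s * w_fun a s z')) \<beta> (complex_of_real \<xi>' + \<i> * complex_of_real a))"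
        by (rule vderiv_iter) (rule psi_holo(2)[OF wn_cont_s[OF assms(1), of \<tau> a 0 z', folded w_fun_wn]])
      then show ?thesis unfolding p_sym_eq \<zeta>_def w_fun_wn by (simp add: fun_eq_iff)
    qed
    define W where "W n z s = K \<tau> \<beta> \<zeta> s * wn a n s z" for n z s
    have dW: "((\<lambda>z. W n z s) has_field_derivative W (Suc n) z s) (at z)" for n z s
      unfolding W_def by (rule DERIV_cmult, rule wn_deriv)
    have cW: "continuous_on (UNIV \<times> {\<tau>0..\<tau>}) (\<lambda>(z,s). W n z s)" for n
    proof -
      have "continuous_on (UNIV \<times> {\<tau>0..\<tau>}) (\<lambda>x. K \<tau> \<beta> \<zeta> (snd x))"
        by (rule continuous_on_compose2[OF K_cont[of UNIV \<tau> \<beta>], where f="\<lambda>x. (\<zeta>, snd x)", simplified])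
           (auto intro!: continuous_intros)
      then show ?thesis unfolding W_def split_beta using wn_cont[OF assms(1), of \<tau> a n]
        by (auto intro!: continuous_intros simp: split_beta)
    qed
    have e3: "(deriv ^^ \<alpha>) (\<lambda>z'. (vderiv ^^ \<beta>) (\<lambda>\<xi>'. p_sym a \<tau>0 \<tau> z' \<xi>') \<xi>) = (\<lambda>z. integral {\<tau>0..\<tau>} (W \<alpha> z))"
      unfolding e2 using int_deriv_iter[of \<tau>0 \<tau> W, OF _ cW, of \<alpha>] dW unfolding W_def by blast
    have e4: "integral {\<tau>0..\<tau>} (W \<alpha> z) = (deriv ^^ \<beta>) (\<lambda>\<eta>. integral {\<tau>0..\<tau>} (\<lambda>s. K \<tau> 0 \<eta> s * wn a \<alpha> s z)) \<zeta>"
      unfolding W_def psi_holo(3)[OF wn_cont_s[OF assms(1), of \<tau> a \<alpha> z]] ..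
    show "norm (((deriv ^^ \<alpha>) (\<lambda>z'. (vderiv ^^ \<beta>) (\<lambda>\<xi>'. p_sym a \<tau>0 \<tau> z' \<xi>') \<xi>)) z) \<le> C * jbr \<xi> powr (- real \<beta>)"
      unfolding e3 e4 \<zeta>_def
      by (rule Cb[OF wn_cont_s[OF assms(1)]]) (use M z in auto)
  qed
qed



lemma v_deriv:
  fixes x a s :: real
  assumes "s > 0"
  shows "((\<lambda>s. (x - 2 * s * a) / sqrt (4 * s)) has_real_derivative
     (- ((x - 2 * s * a) / sqrt (4 * s)) / (2 * s) - a / sqrt s)) (at s)"
proof -
  have sq: "sqrt (4 * s) = 2 * sqrt s" by (simp add: real_sqrt_mult)
  have sp: "sqrt s > 0" using assms by simp
  have ss: "sqrt s * sqrt s = s" using assms by simp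
  have ss2: "sqrt s * (sqrt s * c) = s * c" for c using ss by (simp add: mult.assoc[symmetric])
  have "((\<lambda>s. (x - 2 * s * a) / sqrt (4 * s)) has_real_derivative
     ((0 - 2 * 1 * a) * sqrt (4 * s) - (x - 2 * s * a) * (inverse (sqrt (4 * s)) / 2 * (4 * 1))) / (sqrt (4 * s) * sqrt (4 * s))) (at s)"
    using assms by (auto intro!: derivative_eq_intros)
  moreover have "((0 - 2 * 1 * a) * sqrt (4 * s) - (x - 2 * s * a) * (inverse (sqrt (4 * s)) / 2 * (4 * 1))) / (sqrt (4 * s) * sqrt (4 * s))
      = (- ((x - 2 * s * a) / sqrt (4 * s)) / (2 * s) - a / sqrt s)"
    unfolding sq using sp ss assms by (simp add: field_simps) (simp add: ss2)
  ultimately show ?thesis by simp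
qed



lemma cw_deriv: "((\<lambda>s. cw a s) has_real_derivative cw a s * a\<^sup>2) (at s)"
proof -
  have "((\<lambda>s. exp (s * a\<^sup>2)) has_real_derivative exp (s * a\<^sup>2) * a\<^sup>2) (at s)"
    by (auto intro!: derivative_eq_intros)
  from DERIV_cdivide[OF this, of "sqrt pi"] show ?thesis unfolding cw_def by simp
qed

lemma abs_exp_bound: "\<bar>v\<bar> * exp (- (v\<^sup>2)) \<le> (1::real)"
proof -
  have "\<bar>v\<bar> \<le> 1 + v\<^sup>2"
  proof (cases "\<bar>v\<bar> \<le> 1")
    case True then show ?thesis by (simp add: add_increasing2)
  next
    case False
    then have "\<bar>v\<bar> * 1 \<le> \<bar>v\<bar> * \<bar>v\<bar>" by (intro mult_left_mono) auto
    then show ?thesis by (simp add: power2_eq_square)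
  qed
  also have "\<dots> \<le> exp (v\<^sup>2)" by simp
  finally show ?thesis by (simp add: exp_minus field_simps)
qed

lemma normE: "norm (exp (- complex_of_real (\<tau> - s) * (complex_of_real \<xi> + \<i> * complex_of_real a)\<^sup>2))
   = exp (- (\<tau> - s) * (\<xi>\<^sup>2 - a\<^sup>2))"
  by (simp add: norm_exp_eq_Re Re_power2)

lemma exp_int_le:
  fixes c \<tau> \<tau>0 :: real
  assumes "c > 0" "\<tau>0 \<le> \<tau>"
  shows "integral {\<tau>0..\<tau>} (\<lambda>s. exp (- (\<tau> - s) * c)) \<le> 1 / c"
proof -
  have "integral {\<tau>0..\<tau>} (\<lambda>s. exp (- (\<tau> - s) * c)) = (1 - exp (- (\<tau> - \<tau>0) * c)) / c"
    using exp_int[OF assms] by (rule integral_unique)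
  also have "\<dots> \<le> 1 / c" using assms by (intro divide_right_mono) auto
  finally show ?thesis .
qed

lemma part2:
  fixes a \<tau>0 \<tau> :: real
  assumes "0 < \<tau>0" "\<tau>0 < \<tau>"
  shows "\<exists>C>0. \<forall>x \<xi>::real.
            norm (p_sym a \<tau>0 \<tau> (complex_of_real x) \<xi> - w_fun a \<tau> (complex_of_real x))
              \<le> C * jbr \<xi> powr (-2)"
proof -
  define Gb where "Gb = sqrt pi / 2 + pi / 2"
  define T where "T = \<tau> - \<tau>0"
  define Mw where "Mw = cw a \<tau> * Gb"
  define M1 where "M1 = cw a \<tau> * (1 / (2 * \<tau>0) + \<bar>a\<bar> / sqrt \<tau>0) + cw a \<tau> * a\<^sup>2 * Gb"
  define C where "C = 2 * Mw / T + 2 * M1 + exp (T * a\<^sup>2) * (Mw + M1 * T) * (2 * a\<^sup>2 + 2) + 1"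
  have T: "T > 0" unfolding T_def using assms by simp
  have Gb: "Gb \<ge> 0" unfolding Gb_def by simp
  have cwp: "cw a s > 0" for s unfolding cw_def by simp
  have cwm: "cw a s \<le> cw a \<tau>" if "s \<le> \<tau>" for s
    unfolding cw_def using that by (intro divide_right_mono) (auto intro!: mult_right_mono)
  have Mw: "Mw \<ge> 0" unfolding Mw_def using cwp[of \<tau>] Gb by simp
  have M1: "M1 \<ge> 0" unfolding M1_def using cwp[of \<tau>] Gb assms by (intro add_nonneg_nonneg mult_nonneg_nonneg) auto
  have Cp: "C > 0" unfolding C_def using Mw M1 T by (intro add_nonneg_pos add_nonneg_nonneg mult_nonneg_nonneg) auto
  show ?thesis
  proof (intro exI[of _ C] conjI allI)
    show "C > 0" by fact
    fix x \<xi> :: real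
    define \<zeta> where "\<zeta> = complex_of_real \<xi> + \<i> * complex_of_real a"
    define c where "c = \<xi>\<^sup>2 - a\<^sup>2"
    define v where "v s = (x - 2 * s * a) / sqrt (4 * s)" for s
    define vd where "vd s = - (v s) / (2 * s) - a / sqrt s" for s
    define W where "W s = w_fun a s (complex_of_real x)" for s
    define D where "D s = complex_of_real (cw a s) * (complex_of_real (vd s) * exp (- ((complex_of_real (v s))\<^sup>2)))
        + complex_of_real (cw a s * a\<^sup>2) * gauss_cum (complex_of_real (v s))" for s
    define E where "E s = exp (- complex_of_real (\<tau> - s) * \<zeta>\<^sup>2)" for s
    have Weq: "W s = complex_of_real (cw a s) * gauss_cum (complex_of_real (v s))" for s
      unfolding W_def w_fun_def cw_def v_def by simp
    have nE: "norm (E s) = exp (- (\<tau> - s) * c)" for s unfolding E_def \<zeta>_def c_def by (rule normE)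
    have dW: "(W has_vector_derivative D s) (at s)" if s: "s > 0" for s
    proof -
      have d1: "((\<lambda>s. complex_of_real (cw a s)) has_vector_derivative complex_of_real (cw a s * a\<^sup>2)) (at s)"
        by (rule has_vector_derivative_of_real[OF cw_deriv])
      have dv: "((\<lambda>s. complex_of_real (v s)) has_vector_derivative complex_of_real (vd s)) (at s)"
        unfolding v_def vd_def by (rule has_vector_derivative_of_real[OF v_deriv[OF s]])
      have d2: "((gauss_cum \<circ> (\<lambda>s. complex_of_real (v s))) has_vector_derivative
          complex_of_real (vd s) * exp (- ((complex_of_real (v s))\<^sup>2))) (at s)"
        by (rule field_vector_diff_chain_at[OF dv gauss_cum_deriv])
      have "((\<lambda>s. complex_of_real (cw a s) * (gauss_cum \<circ> (\<lambda>s. complex_of_real (v s))) s) has_vector_derivative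
         complex_of_real (cw a s) * (complex_of_real (vd s) * exp (- ((complex_of_real (v s))\<^sup>2)))
          + complex_of_real (cw a s * a\<^sup>2) * (gauss_cum \<circ> (\<lambda>s. complex_of_real (v s))) s) (at s)"
        by (rule has_vector_derivative_mult[OF d1 d2])
      then show ?thesis unfolding D_def o_def by (simp add: Weq[abs_def])
    qed
    have dE: "(E has_vector_derivative \<zeta>\<^sup>2 * E s) (at s)" for s
    proof -
      have "((\<lambda>z. exp (- (complex_of_real \<tau> - z) * \<zeta>\<^sup>2)) has_field_derivative
          exp (- (complex_of_real \<tau> - complex_of_real s) * \<zeta>\<^sup>2) * (- (0 - 1) * \<zeta>\<^sup>2)) (at (complex_of_real s))"
        by (auto intro!: derivative_eq_intros)
      from has_vector_derivative_real_field[OF this]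
      show ?thesis unfolding E_def by (simp add: mult.commute)
    qed
    \<comment> \<open>integration by parts\<close>
    have ftc: "((\<lambda>s. E s * D s + \<zeta>\<^sup>2 * E s * W s) has_integral (E \<tau> * W \<tau> - E \<tau>0 * W \<tau>0)) {\<tau>0..\<tau>}"
    proof (rule fundamental_theorem_of_calculus[where f="\<lambda>s. E s * W s"])
      show "\<tau>0 \<le> \<tau>" using assms by simp
      fix s assume "s \<in> {\<tau>0..\<tau>}"
      then have s: "s > 0" using assms by auto
      have "((\<lambda>s. E s * W s) has_vector_derivative E s * D s + \<zeta>\<^sup>2 * E s * W s) (at s)"
        using has_vector_derivative_mult[OF dE dW[OF s]] by simp
      then show "((\<lambda>s. E s * W s) has_vector_derivative E s * D s + \<zeta>\<^sup>2 * E s * W s) (at s within {\<tau>0..\<tau>})"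
        by (rule has_vector_derivative_at_within)
    qed
    have cW: "continuous_on {\<tau>0..\<tau>} W" unfolding W_def w_fun_wn by (rule wn_cont_s[OF assms(1)])
    have cK: "continuous_on {\<tau>0..\<tau>} (\<lambda>s. K \<tau> 0 \<zeta> s * W s)"
      unfolding K0 using cW by (auto intro!: continuous_intros)
    define I where "I = integral {\<tau>0..\<tau>} (\<lambda>s. K \<tau> 0 \<zeta> s * W s)"
    have hI: "((\<lambda>s. K \<tau> 0 \<zeta> s * W s) has_integral I) {\<tau>0..\<tau>}"
      unfolding I_def by (rule integrable_integral[OF integrable_continuous_interval[OF cK]])
    have "((\<lambda>s. (E s * D s + \<zeta>\<^sup>2 * E s * W s) - K \<tau> 0 \<zeta> s * W s) has_integral
        (E \<tau> * W \<tau> - E \<tau>0 * W \<tau>0 - I)) {\<tau>0..\<tau>}"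
      by (rule has_integral_diff[OF ftc hI])
    moreover have "(\<lambda>s. (E s * D s + \<zeta>\<^sup>2 * E s * W s) - K \<tau> 0 \<zeta> s * W s) = (\<lambda>s. E s * D s)"
      unfolding K0 E_def by (simp add: fun_eq_iff)
    ultimately have hED: "((\<lambda>s. E s * D s) has_integral (E \<tau> * W \<tau> - E \<tau>0 * W \<tau>0 - I)) {\<tau>0..\<tau>}" by simp
    have pI: "p_sym a \<tau>0 \<tau> (complex_of_real x) \<xi> = I"
      unfolding p_sym_eq I_def W_def \<zeta>_def ..
    have E\<tau>: "E \<tau> = 1" unfolding E_def by simp
    have diff: "p_sym a \<tau>0 \<tau> (complex_of_real x) \<xi> - w_fun a \<tau> (complex_of_real x)
        = - (E \<tau>0 * W \<tau>0) - integral {\<tau>0..\<tau>} (\<lambda>s. E s * D s)"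
      using integral_unique[OF hED] unfolding pI E\<tau> by (simp add: W_def)
    have bW: "norm (W s) \<le> Mw" if "s \<in> {\<tau>0..\<tau>}" for s
    proof -
      have "norm (W s) = cw a s * norm (gauss_cum (complex_of_real (v s)))"
        unfolding Weq using cwp[of s] by (simp add: norm_mult)
      also have "\<dots> \<le> cw a \<tau> * Gb"
        using cwm[of s] that gc_real_bound[of "v s"] cwp[of s] unfolding Gb_def
        by (intro mult_mono) auto
      finally show ?thesis unfolding Mw_def .
    qed
    have bD: "norm (D s) \<le> M1" if "s \<in> {\<tau>0..\<tau>}" for s
    proof -
      have s0: "s \<ge> \<tau>0" "s \<le> \<tau>" using that by auto
      have sp: "s > 0" using s0 assms by simp
      have ev: "exp (- ((complex_of_real (v s))\<^sup>2)) = complex_of_real (exp (- ((v s)\<^sup>2)))"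
        by (simp add: exp_of_real[symmetric])
      have b1: "\<bar>vd s\<bar> * exp (- ((v s)\<^sup>2)) \<le> 1 / (2 * \<tau>0) + \<bar>a\<bar> / sqrt \<tau>0"
      proof -
        have "\<bar>vd s\<bar> \<le> \<bar>- (v s) / (2 * s)\<bar> + \<bar>a / sqrt s\<bar>"
          unfolding vd_def by (rule abs_triangle_ineq4)
        also have "\<dots> = \<bar>v s\<bar> / (2 * s) + \<bar>a\<bar> / sqrt s" using sp by (simp add: abs_divide)
        finally have "\<bar>vd s\<bar> \<le> \<bar>v s\<bar> / (2 * s) + \<bar>a\<bar> / sqrt s" .
        then have "\<bar>vd s\<bar> * exp (- ((v s)\<^sup>2)) \<le> (\<bar>v s\<bar> / (2 * s) + \<bar>a\<bar> / sqrt s) * exp (- ((v s)\<^sup>2))"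
          by (intro mult_right_mono) auto
        also have "\<dots> = (\<bar>v s\<bar> * exp (- ((v s)\<^sup>2))) / (2 * s) + \<bar>a\<bar> / sqrt s * exp (- ((v s)\<^sup>2))"
          by (simp add: algebra_simps)
        also have "\<dots> \<le> 1 / (2 * s) + \<bar>a\<bar> / sqrt s * 1"
          using abs_exp_bound[of "v s"] sp by (intro add_mono divide_right_mono mult_left_mono) auto
        also have "\<dots> \<le> 1 / (2 * \<tau>0) + \<bar>a\<bar> / sqrt \<tau>0"
        proof -
          have "1 / (2 * s) \<le> 1 / (2 * \<tau>0)" by (rule divide_left_mono) (use s0 assms in auto)
          moreover have "\<bar>a\<bar> / sqrt s \<le> \<bar>a\<bar> / sqrt \<tau>0" by (rule divide_left_mono) (use s0 assms in auto)
          ultimately show ?thesis by simp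
        qed
        finally show ?thesis .
      qed
      have nA: "norm (complex_of_real (cw a s) * (complex_of_real (vd s) * exp (- ((complex_of_real (v s))\<^sup>2))))
          = cw a s * (\<bar>vd s\<bar> * exp (- ((v s)\<^sup>2)))" unfolding ev using cwp[of s] by (simp add: norm_mult)
      have nB: "norm (complex_of_real (cw a s * a\<^sup>2) * gauss_cum (complex_of_real (v s)))
          = cw a s * a\<^sup>2 * norm (gauss_cum (complex_of_real (v s)))" using cwp[of s] by (simp add: norm_mult abs_mult norm_power)
      have "norm (D s) \<le> cw a s * (\<bar>vd s\<bar> * exp (- ((v s)\<^sup>2))) + cw a s * a\<^sup>2 * norm (gauss_cum (complex_of_real (v s)))"
        unfolding D_def nA[symmetric] nB[symmetric] by (rule norm_triangle_ineq)
      also have "\<dots> \<le> cw a \<tau> * (1 / (2 * \<tau>0) + \<bar>a\<bar> / sqrt \<tau>0) + cw a \<tau> * a\<^sup>2 * Gb"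
        using cwm[OF s0(2)] cwp[of s] b1 gc_real_bound[of "v s"] unfolding Gb_def
        by (intro add_mono mult_mono) auto
      finally show ?thesis unfolding M1_def .
    qed
    have cb: "continuous_on {\<tau>0..\<tau>} (\<lambda>s. M1 * exp (- (\<tau> - s) * c))" by (auto intro!: continuous_intros)
    have nED: "norm (integral {\<tau>0..\<tau>} (\<lambda>s. E s * D s)) \<le> M1 * integral {\<tau>0..\<tau>} (\<lambda>s. exp (- (\<tau> - s) * c))"
    proof -
      have "norm (integral {\<tau>0..\<tau>} (\<lambda>s. E s * D s)) \<le> integral {\<tau>0..\<tau>} (\<lambda>s. M1 * exp (- (\<tau> - s) * c))"
      proof (rule Henstock_Kurzweil_Integration.integral_norm_bound_integral)
        show "(\<lambda>s. E s * D s) integrable_on {\<tau>0..\<tau>}" using hED by blast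
        show "(\<lambda>s. M1 * exp (- (\<tau> - s) * c)) integrable_on {\<tau>0..\<tau>}"
          by (rule integrable_continuous_interval[OF cb])
        fix s assume "s \<in> {\<tau>0..\<tau>}"
        then show "norm (E s * D s) \<le> M1 * exp (- (\<tau> - s) * c)"
          unfolding norm_mult nE using bD by (simp add: mult.commute mult_left_mono)
      qed
      then show ?thesis by simp
    qed
    have nE0: "norm (E \<tau>0 * W \<tau>0) \<le> exp (- T * c) * Mw"
      unfolding norm_mult nE T_def using bW[of \<tau>0] assms by (intro mult_left_mono) auto
    have main: "norm (p_sym a \<tau>0 \<tau> (complex_of_real x) \<xi> - w_fun a \<tau> (complex_of_real x))
        \<le> exp (- T * c) * Mw + M1 * integral {\<tau>0..\<tau>} (\<lambda>s. exp (- (\<tau> - s) * c))"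
      unfolding diff using nE0 nED norm_triangle_ineq4[of "- (E \<tau>0 * W \<tau>0)" "integral {\<tau>0..\<tau>} (\<lambda>s. E s * D s)"]
      by simp
    have j2: "jbr \<xi> powr (-2) = 1 / (1 + \<xi>\<^sup>2)"
      using jbr_powr[of \<xi> 2] unfolding jbr_def by simp
    have xp: "1 + \<xi>\<^sup>2 > 0" by (simp add: add_pos_nonneg)
    have "exp (- T * c) * Mw + M1 * integral {\<tau>0..\<tau>} (\<lambda>s. exp (- (\<tau> - s) * c)) \<le> C / (1 + \<xi>\<^sup>2)"
    proof (cases "\<xi>\<^sup>2 \<ge> 2 * a\<^sup>2 + 1")
      case True
      have cge: "c \<ge> (1 + \<xi>\<^sup>2) / 2" unfolding c_def using True by simp
      have "0 < (1 + \<xi>\<^sup>2) / 2" using xp by simp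
      then have cp: "c > 0" using cge by linarith
      have "integral {\<tau>0..\<tau>} (\<lambda>s. exp (- (\<tau> - s) * c)) \<le> 1 / c"
        by (rule exp_int_le[OF cp]) (use assms in simp)
      also have "\<dots> \<le> 2 / (1 + \<xi>\<^sup>2)" using cge xp cp by (simp add: divide_simps)
      finally have i1: "integral {\<tau>0..\<tau>} (\<lambda>s. exp (- (\<tau> - s) * c)) \<le> 2 / (1 + \<xi>\<^sup>2)" .
      have "exp (- T * c) = 1 / exp (T * c)" by (simp add: exp_minus field_simps)
      also have "\<dots> \<le> 1 / (1 + T * c)"
      proof (rule divide_left_mono)
        show "1 + T * c \<le> exp (T * c)" by simp
        have "0 < 1 + T * c" using T cp by (simp add: add_pos_pos)
        then show "0 < exp (T * c) * (1 + T * c)" by simp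
      qed simp
      also have "\<dots> \<le> 1 / (T * c)"
      proof (rule divide_left_mono)
        have "0 < T * c" using T cp by simp
        then show "0 < (1 + T * c) * (T * c)" by (simp add: add_pos_pos)
      qed simp_all
      also have "\<dots> \<le> 2 / (T * (1 + \<xi>\<^sup>2))" using T cp cge xp by (simp add: divide_simps)
      finally have e1: "exp (- T * c) \<le> 2 / (T * (1 + \<xi>\<^sup>2))" .
      have "exp (- T * c) * Mw + M1 * integral {\<tau>0..\<tau>} (\<lambda>s. exp (- (\<tau> - s) * c))
          \<le> 2 / (T * (1 + \<xi>\<^sup>2)) * Mw + M1 * (2 / (1 + \<xi>\<^sup>2))"
        by (rule add_mono[OF mult_right_mono[OF e1 Mw] mult_left_mono[OF i1 M1]])
      also have "\<dots> = (2 * Mw / T + 2 * M1) / (1 + \<xi>\<^sup>2)"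
      proof -
        have gen: "\<And>X::real. X > 0 \<Longrightarrow> 2 / (T * X) * Mw + M1 * (2 / X) = (2 * Mw / T + 2 * M1) / X"
          using T by (simp add: field_simps)
        show ?thesis by (rule gen[OF xp])
      qed
      also have "\<dots> \<le> C / (1 + \<xi>\<^sup>2)" unfolding C_def using xp Mw M1 T
        by (intro divide_right_mono) (auto intro!: mult_nonneg_nonneg add_nonneg_nonneg)
      finally show ?thesis .
    next
      case False
      have ce: "exp (- (\<tau> - s) * c) \<le> exp (T * a\<^sup>2)" if "s \<in> {\<tau>0..\<tau>}" for s
      proof -
        have "- (\<tau> - s) * c = (\<tau> - s) * (a\<^sup>2 - \<xi>\<^sup>2)" unfolding c_def by (simp add: algebra_simps)
        also have "\<dots> \<le> (\<tau> - s) * a\<^sup>2" using that by (intro mult_left_mono) auto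
        also have "\<dots> \<le> T * a\<^sup>2" unfolding T_def using that by (intro mult_right_mono) auto
        finally show ?thesis by simp
      qed
      have "integral {\<tau>0..\<tau>} (\<lambda>s. exp (- (\<tau> - s) * c)) \<le> integral {\<tau>0..\<tau>} (\<lambda>s. exp (T * a\<^sup>2))"
      proof (rule integral_le)
        show "(\<lambda>s. exp (- (\<tau> - s) * c)) integrable_on {\<tau>0..\<tau>}"
          by (rule integrable_continuous_interval) (auto intro!: continuous_intros)
        show "(\<lambda>s. exp (T * a\<^sup>2)) integrable_on {\<tau>0..\<tau>}" by (rule integrable_const_ivl)
      qed (rule ce)
      also have "\<dots> = T * exp (T * a\<^sup>2)" unfolding T_def using assms by simp
      finally have i1: "integral {\<tau>0..\<tau>} (\<lambda>s. exp (- (\<tau> - s) * c)) \<le> T * exp (T * a\<^sup>2)" .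
      have e1: "exp (- T * c) \<le> exp (T * a\<^sup>2)" using ce[of \<tau>0] assms unfolding T_def by simp
      have "exp (- T * c) * Mw + M1 * integral {\<tau>0..\<tau>} (\<lambda>s. exp (- (\<tau> - s) * c))
          \<le> exp (T * a\<^sup>2) * Mw + M1 * (T * exp (T * a\<^sup>2))"
        by (rule add_mono[OF mult_right_mono[OF e1 Mw] mult_left_mono[OF i1 M1]])
      also have "\<dots> = exp (T * a\<^sup>2) * (Mw + M1 * T) * 1" by (simp add: algebra_simps)
      also have "\<dots> \<le> exp (T * a\<^sup>2) * (Mw + M1 * T) * ((2 * a\<^sup>2 + 2) / (1 + \<xi>\<^sup>2))"
        using False xp Mw M1 T by (intro mult_left_mono) (auto simp: divide_simps intro!: mult_nonneg_nonneg)
      also have "\<dots> \<le> C / (1 + \<xi>\<^sup>2)" unfolding C_def using xp Mw M1 T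
        by (simp add: divide_simps)
      finally show ?thesis .
    qed
    then show "norm (p_sym a \<tau>0 \<tau> (complex_of_real x) \<xi> - w_fun a \<tau> (complex_of_real x)) \<le> C * jbr \<xi> powr (-2)"
      using main unfolding j2 by simp
  qed
qed


theorem mainTheorem6:
  fixes a \<tau>0 \<tau> :: real
  assumes "0 < \<tau>0" and "\<tau>0 < \<tau>"
  shows "(\<forall>b>0. \<forall>\<alpha> \<beta>::nat. \<exists>C>0. \<forall>z \<xi>. \<bar>Im z\<bar> < b \<longrightarrow>
            norm (((deriv ^^ \<alpha>) (\<lambda>z'. (vderiv ^^ \<beta>) (\<lambda>\<xi>'. p_sym a \<tau>0 \<tau> z' \<xi>') \<xi>)) z)
              \<le> C * jbr \<xi> powr (- real \<beta>))
       \<and> (\<exists>C>0. \<forall>x \<xi>::real.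
            norm (p_sym a \<tau>0 \<tau> (complex_of_real x) \<xi> - w_fun a \<tau> (complex_of_real x))
              \<le> C * jbr \<xi> powr (-2))"
  using part1[OF assms] part2[OF assms] by blast

end
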